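(* Let $\mathcal F=\{f_w:w\in\mathcal W\}$ be measurable functions $\mathsf Z\to\mathbb R$ indexed by a countable set $\mathcal W$, let $Q$ be a distribution on $\mathcal W$, $\gamma>0$, and let $\mu$ be a distribution on $\mathsf Z$ such that $f_w(Z)$, $Z\sim\mu$, is $\sigma^2$-subgaussian for all $w\in\mathcal W$. Let $\widehat w(\mu)$ be an index minimizing $\mu(f_w)$ over $\mathcal W$. If $S=(Z_1,\dots,Z_n)\sim\mu^{\otimes n}$ and, given $S=s$, $W$ has the Gibbs distribution $P^{\gamma,Q}_{W|S=s}(\mathrm dw)\propto e^{-\gamma\mu_s(f_w)}Q(\mathrm dw)$, then $$\mathbb E[\mu(f_W)]\le\inf_{w\in\mathcal W}\mu(f_w)+\frac1\gamma D(\delta_{\widehat w(\mu)}\|Q)+\frac{\gamma\sigma^2}{2n}.$$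
   Context: For $s=(z_1,\dots,z_n)$, $\mu_s(f_w)=\frac1n\sum_{i=1}^nf_w(z_i)$ is the empirical mean and $\mu(f_w)=\mathbb E_{Z\sim\mu}f_w(Z)$ the true mean. $\sigma^2$-subgaussian: $\mathbb E[e^{\lambda(X-\mathbb EX)}]\le e^{\lambda^2\sigma^2/2}$ for all real $\lambda$. $D$ is relative entropy and $D(\delta_{\widehat w}\|Q)=\log(1/Q(\widehat w))$. *)

theory Defs
  imports "HOL-Probability.Probability"
begin

definition subgaussian :: "'a measure \<Rightarrow> ('a \<Rightarrow> real) \<Rightarrow> real \<Rightarrow> bool" where
  "subgaussian M X \<sigma>2 \<longleftrightarrow> prob_space M \<and> X \<in> borel_measurable M \<and> integrable M X \<and>
     (\<forall>l::real. integrable M (\<lambda>z. exp (l * (X z - integral\<^sup>L M X))) \<and>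
        (\<integral>z. exp (l * (X z - integral\<^sup>L M X)) \<partial>M) \<le> exp (l\<^sup>2 * \<sigma>2 / 2))"

definition emp_mean :: "nat \<Rightarrow> ('w \<Rightarrow> 'z \<Rightarrow> real) \<Rightarrow> (nat \<Rightarrow> 'z) \<Rightarrow> 'w \<Rightarrow> real" where
  "emp_mean n f s w = (\<Sum>i<n. f w (s i)) / real n"

definition gibbs_weight :: "real \<Rightarrow> 'w pmf \<Rightarrow> nat \<Rightarrow> ('w \<Rightarrow> 'z \<Rightarrow> real) \<Rightarrow> (nat \<Rightarrow> 'z) \<Rightarrow> 'w \<Rightarrow> real" where
  "gibbs_weight \<gamma> Q n f s w = exp (- \<gamma> * emp_mean n f s w) * pmf Q w"

definition gibbs :: "real \<Rightarrow> 'w pmf \<Rightarrow> nat \<Rightarrow> ('w \<Rightarrow> 'z \<Rightarrow> real) \<Rightarrow> (nat \<Rightarrow> 'z) \<Rightarrow> 'w \<Rightarrow> real" where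
  "gibbs \<gamma> Q n f s w = gibbs_weight \<gamma> Q n f s w / (\<Sum>\<^sub>\<infinity>v. gibbs_weight \<gamma> Q n f s v)"

end

theory Submission
  imports Defs
begin


lemma summable_on_cdivide:
  fixes f :: "'a \<Rightarrow> real"
  shows "f summable_on A \<Longrightarrow> (\<lambda>x. f x / c) summable_on A"
  using summable_on_cmult_left[of f A "1/c"] by simp

lemma infsum_cdivide:
  fixes f :: "'a \<Rightarrow> real"
  shows "infsum (\<lambda>x. f x / c) A = infsum f A / c"
  using infsum_cmult_left'[of f "1/c" A] by simp

lemma gibbs_pointwise:
  fixes u m :: "'w \<Rightarrow> real" and \<gamma> :: real
  assumes g: "\<gamma> > 0" and u0: "\<And>w. u w \<ge> 0" and su: "u summable_on UNIV" and pos: "u w0 > 0"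
    and sT: "(\<lambda>w. u w * exp (\<gamma> * m w)) summable_on UNIV"
    and mn: "\<And>w. m w0 \<le> m w"
  shows "m w0 \<le> (\<Sum>\<^sub>\<infinity>w. u w / infsum u UNIV * m w)"
    and "\<gamma> * (\<Sum>\<^sub>\<infinity>w. u w / infsum u UNIV * m w)
          \<le> ln (\<Sum>\<^sub>\<infinity>w. u w * exp (\<gamma> * m w)) - ln (infsum u UNIV)"
    and "u w0 \<le> infsum u UNIV" and "0 < (\<Sum>\<^sub>\<infinity>w. u w * exp (\<gamma> * m w))"
proof -
  define Z where "Z = infsum u UNIV"
  define T where "T = (\<Sum>\<^sub>\<infinity>w. u w * exp (\<gamma> * m w))"
  define p where "p w = u w / Z" for w
  have "infsum u {w0} \<le> infsum u UNIV"
    by (rule infsum_mono_neutral) (auto simp: su u0)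
  hence Zpos: "Z > 0" using pos by (simp add: Z_def)
  show "u w0 \<le> infsum u UNIV" using \<open>infsum u {w0} \<le> infsum u UNIV\<close> by simp
  have "(\<Sum>\<^sub>\<infinity>w\<in>{w0}. u w * exp (\<gamma> * m w)) \<le> T"
    unfolding T_def by (rule infsum_mono_neutral) (auto simp: sT u0)
  moreover have "(\<Sum>\<^sub>\<infinity>w\<in>{w0}. u w * exp (\<gamma> * m w)) = u w0 * exp (\<gamma> * m w0)" by simp
  ultimately have Tpos: "T > 0" using pos by (smt (verit) exp_gt_zero mult_pos_pos)
  show "0 < (\<Sum>\<^sub>\<infinity>w. u w * exp (\<gamma> * m w))" using Tpos by (simp add: T_def)
  have p0: "p w \<ge> 0" for w using u0 Zpos by (simp add: p_def)
  have sp: "p summable_on UNIV" unfolding p_def using su summable_on_cdivide by blast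
  have p1: "infsum p UNIV = 1" unfolding p_def using Zpos by (simp add: infsum_cdivide Z_def)
  have spe: "(\<lambda>w. p w * exp (\<gamma> * m w)) summable_on UNIV"
    unfolding p_def using summable_on_cdivide[OF sT, of Z] by (simp add: field_simps)
  have spe_val: "(\<Sum>\<^sub>\<infinity>w. p w * exp (\<gamma> * m w)) = T / Z"
    unfolding p_def T_def using infsum_cdivide[of "\<lambda>w. u w * exp (\<gamma> * m w)" Z UNIV] sT
    by (simp add: field_simps)
  have bnd: "norm (p w * m w) \<le> p w * exp (\<gamma> * m w) / \<gamma> + p w * (2 * \<bar>m w0\<bar>)" for w
  proof -
    have "\<gamma> * m w \<le> exp (\<gamma> * m w)" using exp_ge_add_one_self[of "\<gamma> * m w"] by linarith
    hence "m w \<le> exp (\<gamma> * m w) / \<gamma>" using g by (simp add: field_simps)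
    hence "\<bar>m w\<bar> \<le> exp (\<gamma> * m w) / \<gamma> + 2 * \<bar>m w0\<bar>" using mn[of w] by linarith
    hence "p w * \<bar>m w\<bar> \<le> p w * (exp (\<gamma> * m w) / \<gamma> + 2 * \<bar>m w0\<bar>)"
      using p0[of w] mult_left_mono by blast
    thus ?thesis using p0[of w] by (simp add: abs_mult distrib_left)
  qed
  have spm: "(\<lambda>w. p w * m w) summable_on UNIV"
  proof -
    have "(\<lambda>w. p w * exp (\<gamma> * m w) / \<gamma> + p w * (2 * \<bar>m w0\<bar>)) summable_on UNIV"
      by (intro summable_on_add summable_on_cdivide summable_on_cmult_left spe sp)
    hence "(\<lambda>w. norm (p w * m w)) summable_on UNIV"
      by (rule summable_on_comparison_test) (use bnd in auto)
    thus ?thesis using summable_on_iff_abs_summable_on_real by blast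
  qed
  have "(\<Sum>\<^sub>\<infinity>w. p w * m w0) \<le> (\<Sum>\<^sub>\<infinity>w. p w * m w)"
    by (rule infsum_mono) (auto intro: summable_on_cmult_left sp spm mult_left_mono p0 mn)
  thus "m w0 \<le> (\<Sum>\<^sub>\<infinity>w. u w / infsum u UNIV * m w)"
  proof -
    have "(\<Sum>\<^sub>\<infinity>w. p w * m w0) = m w0" using p1 by (simp add: infsum_cmult_left')
    moreover have "(\<lambda>w. p w * m w) = (\<lambda>w. u w / infsum u UNIV * m w)" by (simp add: p_def Z_def)
    ultimately show ?thesis using \<open>(\<Sum>\<^sub>\<infinity>w. p w * m w0) \<le> (\<Sum>\<^sub>\<infinity>w. p w * m w)\<close> by simp
  qed
  define t where "t = ln (T / Z)"
  have "\<gamma> * (p w * m w) \<le> exp (-t) * (p w * exp (\<gamma> * m w)) + (t - 1) * p w" for w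
  proof -
    have "\<gamma> * m w \<le> exp (\<gamma> * m w - t) + t - 1" using exp_ge_add_one_self[of "\<gamma> * m w - t"] by linarith
    hence "p w * (\<gamma> * m w) \<le> p w * (exp (\<gamma> * m w - t) + t - 1)" using p0 mult_left_mono by blast
    moreover have "exp (\<gamma> * m w - t) = exp (-t) * exp (\<gamma> * m w)" by (simp add: exp_diff exp_minus field_simps)
    ultimately show ?thesis by (simp add: algebra_simps)
  qed
  hence "(\<Sum>\<^sub>\<infinity>w. \<gamma> * (p w * m w)) \<le> (\<Sum>\<^sub>\<infinity>w. exp (-t) * (p w * exp (\<gamma> * m w)) + (t - 1) * p w)"
    by (intro infsum_mono summable_on_add summable_on_cmult_right spm spe sp) auto
  also have "\<dots> = exp (-t) * (T / Z) + (t - 1)"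
    by (subst infsum_add) (auto intro: summable_on_cmult_right spe sp simp: infsum_cmult_right' spe_val p1)
  also have "\<dots> = t" using Tpos Zpos by (simp add: t_def exp_minus)
  finally have "\<gamma> * (\<Sum>\<^sub>\<infinity>w. p w * m w) \<le> t" by (simp add: infsum_cmult_right')
  thus "\<gamma> * (\<Sum>\<^sub>\<infinity>w. u w / infsum u UNIV * m w)
          \<le> ln (\<Sum>\<^sub>\<infinity>w. u w * exp (\<gamma> * m w)) - ln (infsum u UNIV)"
    using Tpos Zpos by (simp add: t_def p_def Z_def T_def ln_div)
qed


lemma meas_infsum:
  fixes F :: "'a \<Rightarrow> 'w::countable \<Rightarrow> real"
  assumes "\<And>w. (\<lambda>s. F s w) \<in> borel_measurable N"
  shows "(\<lambda>s. infsum (F s) UNIV) \<in> borel_measurable N"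
proof -
  have eq: "infsum (F s) UNIV = (\<integral>w. F s w \<partial>count_space UNIV)" for s
  proof (cases "integrable (count_space UNIV) (F s)")
    case True
    hence "Infinite_Set_Sum.abs_summable_on (F s) UNIV" by (simp add: abs_summable_on_def)
    thus ?thesis using infsetsum_infsum[of "F s" UNIV] by (simp add: infsetsum_def)
  next
    case False
    hence "\<not> Infinite_Set_Sum.abs_summable_on (F s) UNIV" by (simp add: abs_summable_on_def)
    hence "\<not> F s summable_on UNIV"
      using abs_summable_equivalent summable_on_iff_abs_summable_on_real by blast
    thus ?thesis using False by (simp add: infsum_not_exists not_integrable_integral_eq)
  qed
  interpret C: sigma_finite_measure "count_space (UNIV::'w set)"
    by (rule sigma_finite_measure_count_space_countable) simp
  have j: "case_prod F \<in> borel_measurable (N \<Otimes>\<^sub>M count_space UNIV)"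
  proof -
    have "(\<lambda>p. (\<lambda>w p. F (fst p) w) (snd p) p) \<in> borel_measurable (N \<Otimes>\<^sub>M count_space UNIV)"
      by (rule measurable_compose_countable'[where I=UNIV])
         (auto intro: measurable_compose[OF measurable_fst assms])
    thus ?thesis by (simp add: case_prod_beta')
  qed
  show ?thesis unfolding eq by (rule C.borel_measurable_lebesgue_integral[OF j])
qed

lemma nn_count_summable:
  fixes g :: "'w::countable \<Rightarrow> real"
  assumes g0: "\<And>w. g w \<ge> 0" and fin: "(\<integral>\<^sup>+w. ennreal (g w) \<partial>count_space UNIV) < \<infinity>"
  shows "g summable_on UNIV" "infsum g UNIV = enn2real (\<integral>\<^sup>+w. ennreal (g w) \<partial>count_space UNIV)"
proof -
  have int: "integrable (count_space UNIV) g"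
    by (rule integrableI_nonneg) (use g0 fin in auto)
  hence a: "Infinite_Set_Sum.abs_summable_on g UNIV" by (simp add: abs_summable_on_def)
  thus "g summable_on UNIV"
    using abs_summable_equivalent abs_summable_summable by blast
  have "infsum g UNIV = (\<integral>w. g w \<partial>count_space UNIV)"
    using infsetsum_infsum[OF a] by (simp add: infsetsum_def)
  also have "\<dots> = enn2real (\<integral>\<^sup>+w. ennreal (g w) \<partial>count_space UNIV)"
    by (rule integral_eq_nn_integral) (use g0 in auto)
  finally show "infsum g UNIV = enn2real (\<integral>\<^sup>+w. ennreal (g w) \<partial>count_space UNIV)" .
qed

lemma emp_mean_meas:
  assumes [measurable]: "f w \<in> borel_measurable M"
  shows "(\<lambda>s. emp_mean n f s w) \<in> borel_measurable (PiM {..<n} (\<lambda>_. M))"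
  unfolding emp_mean_def by measurable



lemma mgf_bound:
  fixes f :: "'w \<Rightarrow> 'z \<Rightarrow> real"
  assumes P: "prob_space M" and subg: "subgaussian M (f w) \<sigma>2" and n: "n > 0"
  shows "(\<integral>\<^sup>+ s. ennreal (exp (\<gamma> * ((\<integral>z. f w z \<partial>M) - emp_mean n f s w))) \<partial>PiM {..<n} (\<lambda>_. M))
         \<le> ennreal (exp (\<gamma>\<^sup>2 * \<sigma>2 / (2 * real n)))"
proof -
  define m where "m = (\<integral>z. f w z \<partial>M)"
  define l where "l = - \<gamma> / real n"
  interpret PSF: product_sigma_finite "\<lambda>_. M"
    unfolding product_sigma_finite_def using prob_space_imp_sigma_finite[OF P] by simp
  have meas[measurable]: "f w \<in> borel_measurable M" and int: "integrable M (f w)"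
    and mg: "\<And>l. integrable M (\<lambda>z. exp (l * (f w z - m)))"
    and mgb: "\<And>l. (\<integral>z. exp (l * (f w z - m)) \<partial>M) \<le> exp (l\<^sup>2 * \<sigma>2 / 2)"
    using subg unfolding subgaussian_def m_def by auto
  have eq: "exp (\<gamma> * (m - emp_mean n f s w)) = (\<Prod>i<n. exp (l * (f w (s i) - m)))" for s
  proof -
    have "\<gamma> * (m - emp_mean n f s w) = (\<Sum>i<n. l * (f w (s i) - m))"
    proof -
      have "(\<Sum>i<n. l * (f w (s i) - m)) = l * ((\<Sum>i<n. f w (s i)) - real n * m)"
        by (simp add: sum_distrib_left[symmetric] sum_subtractf)
      also have "\<dots> = \<gamma> * (m - emp_mean n f s w)"
        using n by (simp add: emp_mean_def l_def field_simps)
      finally show ?thesis by simp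
    qed
    thus ?thesis by (simp add: exp_sum)
  qed
  have "(\<integral>\<^sup>+ s. ennreal (exp (\<gamma> * (m - emp_mean n f s w))) \<partial>PiM {..<n} (\<lambda>_. M))
      = (\<integral>\<^sup>+ s. (\<Prod>i\<in>{..<n}. ennreal (exp (l * (f w (s i) - m)))) \<partial>PiM {..<n} (\<lambda>_. M))"
    by (simp add: eq prod_ennreal)
  also have "\<dots> = (\<Prod>i\<in>{..<n}. \<integral>\<^sup>+ z. ennreal (exp (l * (f w z - m))) \<partial>M)"
    by (rule PSF.product_nn_integral_prod[where f="\<lambda>i z. ennreal (exp (l * (f w z - m)))"]) auto
  also have "\<dots> = (\<Prod>i\<in>{..<n}. ennreal (\<integral>z. exp (l * (f w z - m)) \<partial>M))"
    by (intro prod.cong refl nn_integral_eq_integral mg) auto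
  also have "\<dots> = ennreal (\<Prod>i\<in>{..<n}. (\<integral>z. exp (l * (f w z - m)) \<partial>M))"
    by (rule prod_ennreal) auto
  also have "\<dots> \<le> ennreal (\<Prod>i\<in>{..<n}. exp (l\<^sup>2 * \<sigma>2 / 2))"
    by (intro ennreal_leI prod_mono conjI mgb integral_nonneg) auto
  also have "(\<Prod>i\<in>{..<n}. exp (l\<^sup>2 * \<sigma>2 / 2)) = exp (\<gamma>\<^sup>2 * \<sigma>2 / (2 * real n))"
  proof -
    have "(\<Prod>i\<in>{..<n}. exp (l\<^sup>2 * \<sigma>2 / 2)) = exp (real n * (l\<^sup>2 * \<sigma>2 / 2))"
      by (simp add: exp_of_nat_mult[symmetric])
    also have "real n * (l\<^sup>2 * \<sigma>2 / 2) = \<gamma>\<^sup>2 * \<sigma>2 / (2 * real n)"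
      using n by (simp add: l_def power2_eq_square field_simps)
    finally show ?thesis .
  qed
  finally show ?thesis unfolding m_def .
qed



lemma meas_joint:
  fixes F :: "'a \<Rightarrow> 'w::countable \<Rightarrow> 'b"
  assumes "\<And>w. (\<lambda>s. F s w) \<in> measurable N K"
  shows "case_prod F \<in> measurable (N \<Otimes>\<^sub>M count_space UNIV) K"
proof -
  have "(\<lambda>p. (\<lambda>w p. F (fst p) w) (snd p) p) \<in> measurable (N \<Otimes>\<^sub>M count_space UNIV) K"
    by (rule measurable_compose_countable'[where I=UNIV])
       (auto intro: measurable_compose[OF measurable_fst assms])
  thus ?thesis by (simp add: case_prod_beta')
qed

lemma te_bound:
  fixes f :: "'w::countable \<Rightarrow> 'z \<Rightarrow> real" and Q :: "'w pmf"
  assumes P: "prob_space M" and meas: "\<And>w. f w \<in> borel_measurable M"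
    and subg: "\<And>w. subgaussian M (f w) \<sigma>2" and n: "n > 0"
  shows "(\<integral>\<^sup>+ s. (\<integral>\<^sup>+ w. ennreal (pmf Q w * exp (\<gamma> * ((\<integral>z. f w z \<partial>M) - emp_mean n f s w))) \<partial>count_space UNIV) \<partial>PiM {..<n} (\<lambda>_. M))
         \<le> ennreal (exp (\<gamma>\<^sup>2 * \<sigma>2 / (2 * real n)))"
proof -
  let ?PS = "PiM {..<n} (\<lambda>_. M)"
  let ?c = "exp (\<gamma>\<^sup>2 * \<sigma>2 / (2 * real n))"
  have PSp: "prob_space ?PS" by (rule prob_space_PiM) (use P in auto)
  interpret PSC: pair_sigma_finite ?PS "count_space (UNIV::'w set)"
    unfolding pair_sigma_finite_def
    using prob_space_imp_sigma_finite[OF PSp] sigma_finite_measure_count_space_countable[of "UNIV::'w set"]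
    by simp
  have em: "(\<lambda>s. emp_mean n f s w) \<in> borel_measurable ?PS" for w
    unfolding emp_mean_def using meas[of w] by measurable
  have j: "case_prod (\<lambda>s w. ennreal (pmf Q w * exp (\<gamma> * ((\<integral>z. f w z \<partial>M) - emp_mean n f s w))))
      \<in> borel_measurable (?PS \<Otimes>\<^sub>M count_space UNIV)"
    by (rule meas_joint) (use em in measurable)
  have "(\<integral>\<^sup>+ s. (\<integral>\<^sup>+ w. ennreal (pmf Q w * exp (\<gamma> * ((\<integral>z. f w z \<partial>M) - emp_mean n f s w))) \<partial>count_space UNIV) \<partial>?PS)
     = (\<integral>\<^sup>+ w. (\<integral>\<^sup>+ s. ennreal (pmf Q w * exp (\<gamma> * ((\<integral>z. f w z \<partial>M) - emp_mean n f s w))) \<partial>?PS) \<partial>count_space UNIV)"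
    using PSC.Fubini'[OF j] by simp
  also have "\<dots> \<le> (\<integral>\<^sup>+ w. ennreal (pmf Q w) * ennreal ?c \<partial>count_space UNIV)"
  proof (rule nn_integral_mono)
    fix w
    have "(\<integral>\<^sup>+ s. ennreal (pmf Q w * exp (\<gamma> * ((\<integral>z. f w z \<partial>M) - emp_mean n f s w))) \<partial>?PS)
        = ennreal (pmf Q w) * (\<integral>\<^sup>+ s. ennreal (exp (\<gamma> * ((\<integral>z. f w z \<partial>M) - emp_mean n f s w))) \<partial>?PS)"
      by (subst nn_integral_cmult[symmetric]) (use em in \<open>auto simp: ennreal_mult\<close>)
    also have "\<dots> \<le> ennreal (pmf Q w) * ennreal ?c"
      by (intro mult_left_mono mgf_bound[OF P subg n]) auto
    finally show "(\<integral>\<^sup>+ s. ennreal (pmf Q w * exp (\<gamma> * ((\<integral>z. f w z \<partial>M) - emp_mean n f s w))) \<partial>?PS)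
        \<le> ennreal (pmf Q w) * ennreal ?c" .
  qed
  also have "\<dots> = ennreal ?c"
    by (simp add: nn_integral_multc nn_integral_pmf measure_pmf.emeasure_space_1[simplified])
  finally show ?thesis .
qed


theorem proposition5:
  fixes M :: "'z measure" and f :: "'w::countable \<Rightarrow> 'z \<Rightarrow> real" and Q :: "'w pmf"
    and \<gamma> \<sigma>2 :: real and n :: nat and w_hat :: 'w
  assumes "prob_space M"
    and meas: "\<And>w. f w \<in> borel_measurable M"
    and subg: "\<And>w. subgaussian M (f w) \<sigma>2"
    and "\<gamma> > 0" and "n > 0"
    and minim: "\<And>w. (\<integral>z. f w_hat z \<partial>M) \<le> (\<integral>z. f w z \<partial>M)"
    and "pmf Q w_hat > 0"
    and normalisable: "AE s in PiM {..<n} (\<lambda>_. M). gibbs_weight \<gamma> Q n f s summable_on UNIV"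
  shows "integrable (PiM {..<n} (\<lambda>_. M)) (\<lambda>s. \<Sum>\<^sub>\<infinity>w. gibbs \<gamma> Q n f s w * (\<integral>z. f w z \<partial>M))
    \<and> (\<integral>s. (\<Sum>\<^sub>\<infinity>w. gibbs \<gamma> Q n f s w * (\<integral>z. f w z \<partial>M)) \<partial>PiM {..<n} (\<lambda>_. M))
       \<le> (INF w. \<integral>z. f w z \<partial>M) + (1 / \<gamma>) * ln (1 / pmf Q w_hat) + \<gamma> * \<sigma>2 / (2 * real n)"
proof -
  note P = \<open>prob_space M\<close> and gpos = \<open>\<gamma> > 0\<close> and npos = \<open>n > 0\<close> and qpos = \<open>pmf Q w_hat > 0\<close>
  define PS where "PS = PiM {..<n} (\<lambda>_. M)"
  define m where "m w = (\<integral>z. f w z \<partial>M)" for w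
  define c where "c = exp (\<gamma>\<^sup>2 * \<sigma>2 / (2 * real n))"
  define TE where "TE s = (\<integral>\<^sup>+ w. ennreal (pmf Q w * exp (\<gamma> * (m w - emp_mean n f s w))) \<partial>count_space UNIV)" for s
  define Tr where "Tr s = enn2real (TE s)" for s
  define g where "g s = (\<Sum>\<^sub>\<infinity>w. gibbs \<gamma> Q n f s w * m w)" for s
  define R where "R s = (1 / (\<gamma> * c)) * Tr s + emp_mean n f s w_hat + ((ln c - 1) / \<gamma> - ln (pmf Q w_hat) / \<gamma>)" for s
  have PSp: "prob_space PS" unfolding PS_def by (rule prob_space_PiM) (use P in auto)
  interpret PS: prob_space PS by (rule PSp)
  interpret C: sigma_finite_measure "count_space (UNIV::'w set)"
    by (rule sigma_finite_measure_count_space_countable) simp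
  have cpos: "c > 0" by (simp add: c_def)
  have em[measurable]: "(\<lambda>s. emp_mean n f s w) \<in> borel_measurable PS" for w
    unfolding PS_def emp_mean_def using meas[of w] by measurable
  have TEm: "TE \<in> borel_measurable PS"
    unfolding TE_def by (rule C.borel_measurable_nn_integral, rule meas_joint) measurable
  have TEb: "(\<integral>\<^sup>+ s. TE s \<partial>PS) \<le> ennreal c"
    unfolding TE_def PS_def c_def m_def using te_bound[OF P meas subg npos] .
  hence AEfin: "AE s in PS. TE s \<noteq> \<infinity>"
    by (intro nn_integral_PInf_AE TEm) (auto simp: top_unique)
  have Trm: "Tr \<in> borel_measurable PS" unfolding Tr_def using TEm by measurable
  have le1: "ennreal (Tr s) \<le> TE s" for s
    unfolding Tr_def by (cases "TE s") auto
  have nnTr: "(\<integral>\<^sup>+ s. ennreal (Tr s) \<partial>PS) \<le> ennreal c"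
    using nn_integral_mono[of PS "\<lambda>s. ennreal (Tr s)" TE] le1 TEb by (meson order_trans)
  have Trint: "integrable PS Tr"
    by (rule integrableI_nonneg) (use Trm nnTr in \<open>auto simp: Tr_def top_unique less_top[symmetric]\<close>)
  have "ennreal (\<integral>s. Tr s \<partial>PS) = (\<integral>\<^sup>+ s. ennreal (Tr s) \<partial>PS)"
    by (rule nn_integral_eq_integral[symmetric, OF Trint]) (auto simp: Tr_def)
  hence "ennreal (\<integral>s. Tr s \<partial>PS) \<le> ennreal c" using nnTr by simp
  hence TrI: "(\<integral>s. Tr s \<partial>PS) \<le> c" using cpos by (metis ennreal_le_iff less_imp_le)
  have comp: "integrable PS (\<lambda>s. f w_hat (s i)) \<and> (\<integral>s. f w_hat (s i) \<partial>PS) = m w_hat" if "i < n" for i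
  proof -
    have d: "distr PS M (\<lambda>s. s i) = M"
      unfolding PS_def by (rule distr_PiM_component) (use P that in auto)
    have mi: "(\<lambda>s. s i) \<in> measurable PS M" unfolding PS_def
      by (rule measurable_component_singleton) (use that in auto)
    have intf: "integrable M (f w_hat)" using subg[of w_hat] by (simp add: subgaussian_def)
    show ?thesis
      using integrable_distr_eq[OF mi meas[of w_hat]] integral_distr[OF mi meas[of w_hat]] d intf
      by (simp add: m_def)
  qed
  have eint: "integrable PS (\<lambda>s. emp_mean n f s w_hat)"
    unfolding emp_mean_def using comp by (auto intro!: integrable_divide integrable_sum)
  have eI: "(\<integral>s. emp_mean n f s w_hat \<partial>PS) = m w_hat"
  proof -
    have "(\<integral>s. emp_mean n f s w_hat \<partial>PS) = (\<Sum>i<n. \<integral>s. f w_hat (s i) \<partial>PS) / real n"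
      unfolding emp_mean_def using comp by (simp add: integral_sum)
    also have "\<dots> = m w_hat" using comp npos by simp
    finally show ?thesis .
  qed
  have Rint: "integrable PS R" unfolding R_def using Trint eint by auto
  have RI: "(\<integral>s. R s \<partial>PS) \<le> m w_hat + (1 / \<gamma>) * ln (1 / pmf Q w_hat) + \<gamma> * \<sigma>2 / (2 * real n)"
  proof -
    have "(\<integral>s. R s \<partial>PS) = (1 / (\<gamma> * c)) * (\<integral>s. Tr s \<partial>PS) + m w_hat + ((ln c - 1) / \<gamma> - ln (pmf Q w_hat) / \<gamma>)"
      unfolding R_def using Trint eint eI by (simp add: PS.prob_space)
    also have "\<dots> \<le> (1 / (\<gamma> * c)) * c + m w_hat + ((ln c - 1) / \<gamma> - ln (pmf Q w_hat) / \<gamma>)"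
      using divide_right_mono[OF TrI, of "\<gamma> * c"] gpos cpos by simp
    also have "\<dots> = m w_hat + (1 / \<gamma>) * ln (1 / pmf Q w_hat) + \<gamma> * \<sigma>2 / (2 * real n)"
      using gpos cpos qpos npos by (simp add: c_def ln_div power2_eq_square field_simps)
    finally show ?thesis .
  qed
  have AEb: "AE s in PS. m w_hat \<le> g s \<and> g s \<le> R s"
    using AEfin normalisable unfolding PS_def[symmetric]
  proof eventually_elim
    case (elim s)
    let ?u = "gibbs_weight \<gamma> Q n f s"
    have u0: "?u w \<ge> 0" for w by (simp add: gibbs_weight_def)
    have upos: "?u w_hat > 0" using qpos by (simp add: gibbs_weight_def)
    have ue: "?u w * exp (\<gamma> * m w) = pmf Q w * exp (\<gamma> * (m w - emp_mean n f s w))" for w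
      by (simp add: gibbs_weight_def right_diff_distrib exp_diff exp_minus field_simps)
    have fin: "(\<integral>\<^sup>+ w. ennreal (pmf Q w * exp (\<gamma> * (m w - emp_mean n f s w))) \<partial>count_space UNIV) < \<infinity>"
      using elim(1) by (simp add: TE_def less_top)
    have sT: "(\<lambda>w. ?u w * exp (\<gamma> * m w)) summable_on UNIV"
      and Tv: "(\<Sum>\<^sub>\<infinity>w. ?u w * exp (\<gamma> * m w)) = Tr s"
      using nn_count_summable[OF _ fin] by (simp_all add: ue Tr_def TE_def)
    have mn: "m w_hat \<le> m w" for w using minim by (simp add: m_def)
    have gs: "g s = (\<Sum>\<^sub>\<infinity>w. ?u w / infsum ?u UNIV * m w)"
      by (simp add: g_def gibbs_def)
    note pw = gibbs_pointwise[of \<gamma> ?u w_hat m, OF gpos u0 elim(2) upos sT mn]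
    have lo: "m w_hat \<le> g s" using pw(1) gs by simp
    have Tp: "Tr s > 0" using pw(4) Tv by simp
    have Zp: "?u w_hat \<le> infsum ?u UNIV" using pw(3) .
    have "ln (Tr s) = ln (Tr s / c) + ln c" using Tp cpos by (simp add: ln_div)
    also have "\<dots> \<le> Tr s / c - 1 + ln c" using ln_le_minus_one[of "Tr s / c"] Tp cpos by simp
    finally have l1: "ln (Tr s) \<le> Tr s / c - 1 + ln c" .
    have "ln (?u w_hat) \<le> ln (infsum ?u UNIV)" using Zp upos by simp
    moreover have "ln (?u w_hat) = - \<gamma> * emp_mean n f s w_hat + ln (pmf Q w_hat)"
      using qpos by (simp add: gibbs_weight_def ln_mult)
    ultimately have l2: "- ln (infsum ?u UNIV) \<le> \<gamma> * emp_mean n f s w_hat - ln (pmf Q w_hat)" by simp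
    have H: "\<gamma> * g s \<le> Tr s / c - 1 + ln c + \<gamma> * emp_mean n f s w_hat - ln (pmf Q w_hat)"
      using pw(2) gs Tv l1 l2 by simp
    have "g s \<le> (Tr s / c - 1 + ln c + \<gamma> * emp_mean n f s w_hat - ln (pmf Q w_hat)) / \<gamma>"
      using H gpos by (simp add: pos_le_divide_eq mult.commute)
    moreover have "(Tr s / c - 1 + ln c + \<gamma> * emp_mean n f s w_hat - ln (pmf Q w_hat)) / \<gamma> = R s"
      using gpos cpos by (simp add: R_def field_simps)
    ultimately have "g s \<le> R s" by simp
    thus ?case using lo by simp
  qed
  have gwm: "(\<lambda>s. gibbs_weight \<gamma> Q n f s w) \<in> borel_measurable PS" for w
    unfolding gibbs_weight_def by measurable
  have gm: "g \<in> borel_measurable PS"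
    unfolding g_def gibbs_def
    by (intro meas_infsum borel_measurable_times borel_measurable_divide gwm meas_infsum) simp
  have gint: "integrable PS g"
  proof (rule Bochner_Integration.integrable_bound[where f="\<lambda>s. \<bar>m w_hat\<bar> + \<bar>R s\<bar>"])
    show "integrable PS (\<lambda>s. \<bar>m w_hat\<bar> + \<bar>R s\<bar>)" using Rint by auto
    show "g \<in> borel_measurable PS" by (rule gm)
    show "AE s in PS. norm (g s) \<le> norm (\<bar>m w_hat\<bar> + \<bar>R s\<bar>)"
      using AEb by eventually_elim auto
  qed
  have gI: "(\<integral>s. g s \<partial>PS) \<le> (\<integral>s. R s \<partial>PS)"
    by (rule integral_mono_AE[OF gint Rint]) (use AEb in eventually_elim, auto)
  have INF: "(INF w. \<integral>z. f w z \<partial>M) = m w_hat"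
    unfolding m_def by (rule cInf_eq_minimum) (use minim in auto)
  show ?thesis
    using gint gI RI INF unfolding g_def m_def PS_def by simp
qed

end
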